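(* If $\Gamma_G$ is population monotonic, then $G$ has no induced subgraph isomorphic to the cycle $C_4$.
   Context: $G=(V,E;w)$ is a finite simple graph with edge weights $w:E\to\mathbb{R}$, $w_e>0$ for all $e\in E$. The matching game on $G$ is the cooperative game $\Gamma_G=(N,\gamma)$ with player set $N=V$ and, for $S\subseteq N$, $\gamma(S)$ equal to the maximum weight of a matching in the induced subgraph $G[S]$ (so $\gamma(\emptyset)=0$). A population monotonic allocation scheme (PMAS) is a family $(\boldsymbol{x}_S)_{\emptyset\neq S\subseteq N}$ with $\boldsymbol{x}_S=(x_{S,i})_{i\in S}\in\mathbb{R}^S$ such that (efficiency) $\sum_{i\in S}x_{S,i}=\gamma(S)$ for every nonempty $S\subseteq N$, and (monotonicity) $x_{S,i}\le x_{T,i}$ whenever $\emptyset\ne S\subseteq T\subseteq N$ and $i\in S$. $\Gamma_G$ is called population monotonic if it admits a PMAS. *)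

theory Defs
  imports Complex_Main
begin

definition simple_graph :: "'a set \<Rightarrow> 'a set set \<Rightarrow> bool" where
  "simple_graph V E \<longleftrightarrow> finite V \<and> (\<forall>e\<in>E. e \<subseteq> V \<and> card e = 2)"

definition matching_in :: "'a set set \<Rightarrow> 'a set \<Rightarrow> 'a set set \<Rightarrow> bool" where
  "matching_in E S M \<longleftrightarrow> M \<subseteq> E \<and> (\<forall>e\<in>M. e \<subseteq> S) \<and>
     (\<forall>e1\<in>M. \<forall>e2\<in>M. e1 \<noteq> e2 \<longrightarrow> e1 \<inter> e2 = {})"

(* characteristic function of the matching game: maximum weight of a matching in G[S] *)
definition gamma :: "'a set set \<Rightarrow> ('a set \<Rightarrow> real) \<Rightarrow> 'a set \<Rightarrow> real" where
  "gamma E w S = Max ((\<lambda>M. sum w M) ` {M. matching_in E S M})"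

definition is_PMAS :: "'a set \<Rightarrow> 'a set set \<Rightarrow> ('a set \<Rightarrow> real) \<Rightarrow> ('a set \<Rightarrow> 'a \<Rightarrow> real) \<Rightarrow> bool" where
  "is_PMAS V E w x \<longleftrightarrow>
     (\<forall>S. S \<subseteq> V \<and> S \<noteq> {} \<longrightarrow> (\<Sum>i\<in>S. x S i) = gamma E w S) \<and>
     (\<forall>S T i. S \<noteq> {} \<and> S \<subseteq> T \<and> T \<subseteq> V \<and> i \<in> S \<longrightarrow> x S i \<le> x T i)"

definition population_monotonic :: "'a set \<Rightarrow> 'a set set \<Rightarrow> ('a set \<Rightarrow> real) \<Rightarrow> bool" where
  "population_monotonic V E w \<longleftrightarrow> (\<exists>x. is_PMAS V E w x)"

definition C4_adj :: "nat \<Rightarrow> nat \<Rightarrow> bool" where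
  "C4_adj i j \<longleftrightarrow> j = (i + 1) mod 4 \<or> i = (j + 1) mod 4"

definition has_induced_C4 :: "'a set \<Rightarrow> 'a set set \<Rightarrow> bool" where
  "has_induced_C4 V E \<longleftrightarrow> (\<exists>f. inj_on f {0..<4} \<and> f ` {0..<4} \<subseteq> V \<and>
     (\<forall>i<4. \<forall>j<4. ({f i, f j} \<in> E \<longleftrightarrow> C4_adj i j)))"

end

theory Submission
  imports Defs
begin

lemma matchings_finite:
  assumes "finite S"
  shows "finite {M. matching_in E S M}"
proof -
  have "{M. matching_in E S M} \<subseteq> Pow (Pow S)" unfolding matching_in_def by auto
  thus ?thesis using assms by (meson finite_Pow_iff finite_subset)
qed

lemma gamma_ge:
  assumes "finite S" "matching_in E S M"
  shows "sum w M \<le> gamma E w S"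
  unfolding gamma_def using assms matchings_finite[OF assms(1), of E] by auto

lemma gamma_le:
  assumes "finite S" "\<And>M. matching_in E S M \<Longrightarrow> sum w M \<le> c"
  shows "gamma E w S \<le> c"
proof -
  have ne: "matching_in E S {}" unfolding matching_in_def by auto
  show ?thesis unfolding gamma_def
    using assms matchings_finite[OF assms(1), of E] ne
    by (subst Max_le_iff) auto
qed

lemma gamma_pos: "finite S \<Longrightarrow> 0 \<le> gamma E w S"
  using gamma_ge[of S E "{}" w] unfolding matching_in_def by auto

lemma gamma_edge:
  assumes "{p,q} \<in> E"
  shows "w {p,q} \<le> gamma E w {p,q}"
  using gamma_ge[of "{p,q}" E "{{p,q}}" w] assms unfolding matching_in_def by auto

lemma gamma_path3:
  assumes sg: "simple_graph V E" and pos: "\<forall>e\<in>E. w e > 0"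
    and d: "p \<noteq> q" "q \<noteq> r" "p \<noteq> r"
    and npr: "{p,r} \<notin> E" and le: "w {q,r} \<le> w {p,q}" and pqE: "{p,q} \<in> E"
  shows "gamma E w {p,q,r} \<le> w {p,q}"
proof (rule gamma_le)
  show "finite {p,q,r}" by simp
  fix M assume m: "matching_in E {p,q,r} M"
  have sub: "M \<subseteq> {{p,q},{q,r}}"
  proof
    fix e assume e: "e \<in> M"
    hence eE: "e \<in> E" and es: "e \<subseteq> {p,q,r}" using m unfolding matching_in_def by auto
    have "card e = 2" using sg eE unfolding simple_graph_def by auto
    then obtain a b where ab: "e = {a,b}" "a \<noteq> b" by (meson card_2_iff)
    have "{a,b} \<noteq> {p,r}" using npr eE ab by auto
    moreover have "{a,b} \<noteq> {r,p}" using npr eE ab by (auto simp: insert_commute)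
    ultimately show "e \<in> {{p,q},{q,r}}" using es ab by auto
  qed
  have notboth: "\<not> ({p,q} \<in> M \<and> {q,r} \<in> M)"
  proof
    assume h: "{p,q} \<in> M \<and> {q,r} \<in> M"
    have "{p,q} \<noteq> {q,r}" proof
      assume "{p,q} = {q,r}"
      hence "p \<in> {q,r}" by blast
      thus False using d by blast
    qed
    note neq = this
    have disj: "\<forall>e1\<in>M. \<forall>e2\<in>M. e1 \<noteq> e2 \<longrightarrow> e1 \<inter> e2 = {}"
      using m unfolding matching_in_def by (elim conjE)
    have "{p,q} \<inter> {q,r} = {}" using disj h neq by simp
    thus False by auto
  qed
  have pq: "{p,q} \<in> M \<Longrightarrow> 0 < w {p,q}" using m pos unfolding matching_in_def by auto
  have qr: "{q,r} \<in> M \<Longrightarrow> 0 < w {q,r}" using m pos unfolding matching_in_def by auto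
  have "M = {} \<or> M = {{p,q}} \<or> M = {{q,r}}" using sub notboth by blast
  thus "sum w M \<le> w {p,q}"
  proof (elim disjE)
    assume "M = {}" thus ?thesis using pos pqE by force
  next
    assume "M = {{p,q}}" thus ?thesis by simp
  next
    assume M: "M = {{q,r}}" thus ?thesis using le by simp
  qed
qed

lemma side_zero:
  assumes sg: "simple_graph V E" and pos: "\<forall>e\<in>E. w e > 0" and px: "is_PMAS V E w x"
    and V: "p \<in> V" "q \<in> V" "r \<in> V"
    and d: "p \<noteq> q" "q \<noteq> r" "p \<noteq> r"
    and pq: "{p,q} \<in> E" and npr: "{p,r} \<notin> E" and le: "w {q,r} \<le> w {p,q}"
  shows "x {q,r} r \<le> 0"
proof -
  have eff: "\<And>S. S \<subseteq> V \<Longrightarrow> S \<noteq> {} \<Longrightarrow> (\<Sum>i\<in>S. x S i) = gamma E w S"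
    using px unfolding is_PMAS_def by blast
  have mono: "\<And>S T i. S \<noteq> {} \<Longrightarrow> S \<subseteq> T \<Longrightarrow> T \<subseteq> V \<Longrightarrow> i \<in> S \<Longrightarrow> x S i \<le> x T i"
    using px unfolding is_PMAS_def by blast
  have "x {r} r = gamma E w {r}" using eff[of "{r}"] V by simp
  hence r0: "0 \<le> x {r} r" using gamma_pos[of "{r}" E w] by simp
  have r1: "x {r} r \<le> x {p,q,r} r" using mono[of "{r}" "{p,q,r}" r] V by auto
  have "x {p,q} p + x {p,q} q = gamma E w {p,q}" using eff[of "{p,q}"] V d by simp
  hence ab: "w {p,q} \<le> x {p,q} p + x {p,q} q" using gamma_edge[OF pq, of w] by simp
  have a1: "x {p,q} p \<le> x {p,q,r} p" using mono[of "{p,q}" "{p,q,r}" p] V by auto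
  have b1: "x {p,q} q \<le> x {p,q,r} q" using mono[of "{p,q}" "{p,q,r}" q] V by auto
  have "x {p,q,r} p + x {p,q,r} q + x {p,q,r} r = gamma E w {p,q,r}"
    using eff[of "{p,q,r}"] V d by simp
  moreover have "gamma E w {p,q,r} \<le> w {p,q}" using gamma_path3[OF sg pos d npr le pq] .
  ultimately have "x {p,q,r} r \<le> 0" using ab a1 b1 by linarith
  moreover have "x {q,r} r \<le> x {p,q,r} r" using mono[of "{q,r}" "{p,q,r}" r] V by auto
  ultimately show ?thesis by linarith
qed

lemma P4_false:
  assumes sg: "simple_graph V E" and pos: "\<forall>e\<in>E. w e > 0" and px: "is_PMAS V E w x"
    and V: "p \<in> V" "q \<in> V" "r \<in> V" "s \<in> V"
    and d: "p \<noteq> q" "q \<noteq> r" "p \<noteq> r" "r \<noteq> s" "q \<noteq> s"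
    and pq: "{p,q} \<in> E" and qr: "{q,r} \<in> E" and rs: "{r,s} \<in> E"
    and npr: "{p,r} \<notin> E" and nqs: "{q,s} \<notin> E"
    and le1: "w {q,r} \<le> w {p,q}" and le2: "w {q,r} \<le> w {r,s}"
  shows False
proof -
  have eff: "\<And>S. S \<subseteq> V \<Longrightarrow> S \<noteq> {} \<Longrightarrow> (\<Sum>i\<in>S. x S i) = gamma E w S"
    using px unfolding is_PMAS_def by blast
  have h1: "x {q,r} r \<le> 0" using side_zero[OF sg pos px V(1,2,3) d(1,2,3) pq npr le1] .
  have rs': "{s,r} \<in> E" using rs by (simp add: insert_commute)
  have le2': "w {r,q} \<le> w {s,r}" using le2 by (simp add: insert_commute)
  have h2: "x {r,q} q \<le> 0"
    using side_zero[OF sg pos px V(4,3,2) _ _ _ rs' _ le2'] d nqs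
    by (auto simp: insert_commute)
  have "x {q,r} q + x {q,r} r = gamma E w {q,r}" using eff[of "{q,r}"] V d by simp
  moreover have "w {q,r} \<le> gamma E w {q,r}" using gamma_edge[OF qr] .
  moreover have "0 < w {q,r}" using pos qr by auto
  ultimately show False using h1 h2 by (simp add: insert_commute)
qed

theorem mainTheorem8:
  fixes V :: "'a set" and E :: "'a set set" and w :: "'a set \<Rightarrow> real"
  assumes "simple_graph V E"
    and "\<forall>e\<in>E. w e > 0"
    and "population_monotonic V E w"
  shows "\<not> has_induced_C4 V E"
proof
  assume "has_induced_C4 V E"
  then obtain f where inj: "inj_on f {0..<4}" and fV: "f ` {0..<4} \<subseteq> V"
    and adj: "\<forall>i<4. \<forall>j<4. ({f i, f j} \<in> E \<longleftrightarrow> C4_adj i j)"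
    unfolding has_induced_C4_def by blast
  obtain x where px: "is_PMAS V E w x" using assms(3) unfolding population_monotonic_def by blast
  define a where "a = f 0"
  define b where "b = f 1"
  define c where "c = f 2"
  define d where "d = f 3"
  have V: "a \<in> V" "b \<in> V" "c \<in> V" "d \<in> V" using fV unfolding a_def b_def c_def d_def by auto
  have ne: "a \<noteq> b" "a \<noteq> c" "a \<noteq> d" "b \<noteq> c" "b \<noteq> d" "c \<noteq> d"
    unfolding a_def b_def c_def d_def
    using inj_onD[OF inj, of 0 1] inj_onD[OF inj, of 0 2] inj_onD[OF inj, of 0 3]
      inj_onD[OF inj, of 1 2] inj_onD[OF inj, of 1 3] inj_onD[OF inj, of 2 3] by auto
  have E1: "{a,b} \<in> E" "{b,c} \<in> E" "{c,d} \<in> E" "{d,a} \<in> E"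
    using adj unfolding a_def b_def c_def d_def C4_adj_def by auto
  have E2: "{a,c} \<notin> E" "{b,d} \<notin> E" "{c,a} \<notin> E" "{d,b} \<notin> E"
    using adj unfolding a_def b_def c_def d_def C4_adj_def by auto
  have "(w {a,b} \<le> w {d,a} \<and> w {a,b} \<le> w {b,c}) \<or> (w {b,c} \<le> w {a,b} \<and> w {b,c} \<le> w {c,d})
     \<or> (w {c,d} \<le> w {b,c} \<and> w {c,d} \<le> w {d,a}) \<or> (w {d,a} \<le> w {c,d} \<and> w {d,a} \<le> w {a,b})"
    by linarith
  thus False
  proof (elim disjE)
    assume h: "w {a,b} \<le> w {d,a} \<and> w {a,b} \<le> w {b,c}"
    show False using P4_false[OF assms(1,2) px V(4,1,2,3) _ _ _ _ _ E1(4,1,2) _ _ ] h ne E2 by auto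
  next
    assume h: "w {b,c} \<le> w {a,b} \<and> w {b,c} \<le> w {c,d}"
    show False using P4_false[OF assms(1,2) px V(1,2,3,4) _ _ _ _ _ E1(1,2,3) _ _ ] h ne E2 by auto
  next
    assume h: "w {c,d} \<le> w {b,c} \<and> w {c,d} \<le> w {d,a}"
    show False using P4_false[OF assms(1,2) px V(2,3,4,1) _ _ _ _ _ E1(2,3,4) _ _ ] h ne E2 by auto
  next
    assume h: "w {d,a} \<le> w {c,d} \<and> w {d,a} \<le> w {a,b}"
    show False using P4_false[OF assms(1,2) px V(3,4,1,2) _ _ _ _ _ E1(3,4,1) _ _ ] h ne E2 by auto
  qed
qed

end
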